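(* Let $S$ be a finite semigroup, $J$ a regular $\mathscr J$-class, and $\Omega$ a semisimple partial $S$-set all of whose strong orbits have apex $J$. Then there is a surjective $S$-equivariant map $\theta\colon\Omega e_J\otimes_{G_J}R_J\to\Omega$ which is injective on $(\Omega e_J\otimes_{G_J}R_J)e_J$. Consequently, the Green's quotient $(\Omega e_J\otimes_{G_J}R_J)/{\sim}$ with respect to $e_J$ is a quotient of $\Omega$ (i.e., there is a surjective $S$-equivariant map from $\Omega$ onto it), and $[(\Omega e_J\otimes_{G_J}R_J)/{\sim}]e_J\cong\Omega e_J$ as $G_J$-sets.
   Context: Semigroups act on the right; $e_J\in J$ is a fixed idempotent, $G_J$ its maximal subgroup, $R_J$ its $\mathscr R$-class. A partial $S$-set is a finite set with a right action by partial maps; equalities of possibly undefined expressions mean both undefined or both defined and equal; a map $\phi$ is $S$-equivariant if $\phi(\alpha s)=\phi(\alpha)s$ in this sense. For a partial $S$-set $\Lambda$, $\Lambda e_J=\{\alpha e_J\mid \alpha e_J\text{ defined}\}$, a $G_J$-set. The strong orbit of $\alpha$ is $\{\beta\mid\alpha S^1=\beta S^1\}$, transitive if $\mathscr OS\cap\mathscr O\ne\emptyset$; $\Omega$ is semisimple if all strong orbits are transitive and $S$-invariant. For a transitive strong orbit $\mathscr O$ (a partial $S$-set by restriction) there is a unique minimal $\mathscr J$-class $J$ with $\mathscr Os\ne\emptyset$ for some $s\in J$, called its apex. $R_J$ is a partial $S$-set via $r\cdot s=rs$ if $rs\in R_J$, undefined otherwise. For a right $G_J$-set $X$, $X\otimes_{G_J}R_J$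 is the orbit set of $X\times R_J$ under $(x,r)g=(xg,g^{-1}r)$, with orbits written $x\otimes r$, and partial $S$-action $(x\otimes r)s=x\otimes rs$ if $rs\in R_J$, undefined otherwise. For a partial $S$-set $\Lambda$, the Green's congruence with respect to $e_J$ is $\alpha\sim\beta$ iff $\alpha se_J=\beta se_J$ for all $s\in S$, and $\Lambda/{\sim}$ (with $[\alpha]s=[\alpha s]$) is the Green's quotient. *)

theory Defs
  imports Main
begin

(* Semigroups act on the right. The finite semigroup S is the type 'a of class
   {finite, semigroup_mult}. S^1 is handled by adjoining the trivial cases explicitly. *)

definition rideal :: "'a::semigroup_mult \<Rightarrow> 'a set" where
  "rideal a = {a} \<union> {a * y | y. True}"

definition lideal :: "'a::semigroup_mult \<Rightarrow> 'a set" where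
  "lideal a = {a} \<union> {x * a | x. True}"

definition tideal :: "'a::semigroup_mult \<Rightarrow> 'a set" where
  "tideal a = {a} \<union> {x * a | x. True} \<union> {a * y | y. True} \<union> {x * a * y | x y. True}"

definition Rclass :: "'a::semigroup_mult \<Rightarrow> 'a set" where
  "Rclass a = {b. rideal b = rideal a}"

definition Lclass :: "'a::semigroup_mult \<Rightarrow> 'a set" where
  "Lclass a = {b. lideal b = lideal a}"

definition Hclass :: "'a::semigroup_mult \<Rightarrow> 'a set" where
  "Hclass a = Rclass a \<inter> Lclass a"

definition Jclass :: "'a::semigroup_mult \<Rightarrow> 'a set" where
  "Jclass a = {b. tideal b = tideal a}"

definition is_Jclass :: "'a::semigroup_mult set \<Rightarrow> bool" where
  "is_Jclass J \<longleftrightarrow> (\<exists>a. J = Jclass a)"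

definition regular_Jclass :: "'a::semigroup_mult set \<Rightarrow> bool" where
  "regular_Jclass J \<longleftrightarrow> is_Jclass J \<and> (\<exists>a\<in>J. \<exists>x. a * x * a = a)"

definition Jclass_le :: "'a::semigroup_mult set \<Rightarrow> 'a set \<Rightarrow> bool" where
  "Jclass_le J1 J2 \<longleftrightarrow> (\<exists>a\<in>J1. \<exists>b\<in>J2. tideal a \<subseteq> tideal b)"

definition partial_Sset :: "'c set \<Rightarrow> ('c \<Rightarrow> 'a::semigroup_mult \<Rightarrow> 'c option) \<Rightarrow> bool" where
  "partial_Sset A act \<longleftrightarrow> finite A \<and>
     (\<forall>x\<in>A. \<forall>s y. act x s = Some y \<longrightarrow> y \<in> A) \<and>
     (\<forall>x\<in>A. \<forall>s t. act x (s * t) = Option.bind (act x s) (\<lambda>y. act y t))"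

definition equivariant ::
  "'c set \<Rightarrow> ('c \<Rightarrow> 'a::semigroup_mult \<Rightarrow> 'c option) \<Rightarrow> ('d \<Rightarrow> 'a \<Rightarrow> 'd option) \<Rightarrow> ('c \<Rightarrow> 'd) \<Rightarrow> bool" where
  "equivariant A actA actB \<phi> \<longleftrightarrow> (\<forall>x\<in>A. \<forall>s. map_option \<phi> (actA x s) = actB (\<phi> x) s)"

definition act_image :: "'c set \<Rightarrow> ('c \<Rightarrow> 'a \<Rightarrow> 'c option) \<Rightarrow> 'a \<Rightarrow> 'c set" where
  "act_image A act e = {y. \<exists>x\<in>A. act x e = Some y}"

definition orbit1 :: "('c \<Rightarrow> 'a \<Rightarrow> 'c option) \<Rightarrow> 'c \<Rightarrow> 'c set" where
  "orbit1 act x = {x} \<union> {y. \<exists>s. act x s = Some y}"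

definition strong_orbit :: "'c set \<Rightarrow> ('c \<Rightarrow> 'a \<Rightarrow> 'c option) \<Rightarrow> 'c \<Rightarrow> 'c set" where
  "strong_orbit A act x = {y\<in>A. orbit1 act x = orbit1 act y}"

definition transitive_orbit :: "('c \<Rightarrow> 'a \<Rightarrow> 'c option) \<Rightarrow> 'c set \<Rightarrow> bool" where
  "transitive_orbit act Orb \<longleftrightarrow> (\<exists>x\<in>Orb. \<exists>s y. act x s = Some y \<and> y \<in> Orb)"

definition invariant_orbit :: "('c \<Rightarrow> 'a \<Rightarrow> 'c option) \<Rightarrow> 'c set \<Rightarrow> bool" where
  "invariant_orbit act Orb \<longleftrightarrow> (\<forall>x\<in>Orb. \<forall>s y. act x s = Some y \<longrightarrow> y \<in> Orb)"

definition semisimple :: "'c set \<Rightarrow> ('c \<Rightarrow> 'a \<Rightarrow> 'c option) \<Rightarrow> bool" where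
  "semisimple A act \<longleftrightarrow> (\<forall>x\<in>A. transitive_orbit act (strong_orbit A act x)
                                  \<and> invariant_orbit act (strong_orbit A act x))"

(* Orb s \<noteq> {} for the strong orbit Orb viewed as partial S-set by restriction *)
definition orbit_hit :: "('c \<Rightarrow> 'a \<Rightarrow> 'c option) \<Rightarrow> 'c set \<Rightarrow> 'a \<Rightarrow> bool" where
  "orbit_hit act Orb s \<longleftrightarrow> (\<exists>x\<in>Orb. \<exists>y\<in>Orb. act x s = Some y)"

definition hitting_Jclasses :: "('c \<Rightarrow> 'a::semigroup_mult \<Rightarrow> 'c option) \<Rightarrow> 'c set \<Rightarrow> 'a set set" where
  "hitting_Jclasses act Orb = {J. is_Jclass J \<and> (\<exists>s\<in>J. orbit_hit act Orb s)}"

definition minimal_hitting :: "('c \<Rightarrow> 'a::semigroup_mult \<Rightarrow> 'c option) \<Rightarrow> 'c set \<Rightarrow> 'a set \<Rightarrow> bool" where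
  "minimal_hitting act Orb J \<longleftrightarrow> J \<in> hitting_Jclasses act Orb \<and>
     (\<forall>J'\<in>hitting_Jclasses act Orb. Jclass_le J' J \<longrightarrow> J' = J)"

definition apex :: "('c \<Rightarrow> 'a::semigroup_mult \<Rightarrow> 'c option) \<Rightarrow> 'c set \<Rightarrow> 'a set \<Rightarrow> bool" where
  "apex act Orb J \<longleftrightarrow> minimal_hitting act Orb J \<and> (\<forall>J'. minimal_hitting act Orb J' \<longrightarrow> J' = J)"

(* orbit x \<otimes> r of (x,r) under (x,r)g = (xg, g^{-1} r), g \<in> G = G_J (identity e) *)
definition tcl :: "'c set \<Rightarrow> ('c \<Rightarrow> 'a::semigroup_mult \<Rightarrow> 'c option) \<Rightarrow> 'a \<Rightarrow> 'c \<Rightarrow> 'a \<Rightarrow> ('c \<times> 'a) set" where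
  "tcl X act e x r = {(x', r'). x' \<in> X \<and> r' \<in> Rclass e \<and>
      (\<exists>g\<in>Hclass e. \<exists>h\<in>Hclass e. g * h = e \<and> h * g = e \<and> act x g = Some x' \<and> r' = h * r)}"

definition tensor :: "'c set \<Rightarrow> ('c \<Rightarrow> 'a::semigroup_mult \<Rightarrow> 'c option) \<Rightarrow> 'a \<Rightarrow> ('c \<times> 'a) set set" where
  "tensor X act e = {tcl X act e x r | x r. x \<in> X \<and> r \<in> Rclass e}"

definition tact :: "'c set \<Rightarrow> ('c \<Rightarrow> 'a::semigroup_mult \<Rightarrow> 'c option) \<Rightarrow> 'a \<Rightarrow> ('c \<times> 'a) set \<Rightarrow> 'a \<Rightarrow> ('c \<times> 'a) set option" where
  "tact X act e C s = (let p = (SOME p. p \<in> C) in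
      if snd p * s \<in> Rclass e then Some (tcl X act e (fst p) (snd p * s)) else None)"

definition green_rel :: "'c set \<Rightarrow> ('c \<Rightarrow> 'a::semigroup_mult \<Rightarrow> 'c option) \<Rightarrow> 'a \<Rightarrow> ('c \<times> 'c) set" where
  "green_rel A act e = {(x, y). x \<in> A \<and> y \<in> A \<and>
      (\<forall>s. Option.bind (act x s) (\<lambda>z. act z e) = Option.bind (act y s) (\<lambda>z. act z e))}"

definition gcl :: "'c set \<Rightarrow> ('c \<Rightarrow> 'a::semigroup_mult \<Rightarrow> 'c option) \<Rightarrow> 'a \<Rightarrow> 'c \<Rightarrow> 'c set" where
  "gcl A act e x = green_rel A act e `` {x}"

definition green_quot :: "'c set \<Rightarrow> ('c \<Rightarrow> 'a::semigroup_mult \<Rightarrow> 'c option) \<Rightarrow> 'a \<Rightarrow> 'c set set" where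
  "green_quot A act e = A // green_rel A act e"

definition gact :: "'c set \<Rightarrow> ('c \<Rightarrow> 'a::semigroup_mult \<Rightarrow> 'c option) \<Rightarrow> 'a \<Rightarrow> 'c set \<Rightarrow> 'a \<Rightarrow> 'c set option" where
  "gact A act e Q s = (let x = (SOME x. x \<in> Q) in map_option (gcl A act e) (act x s))"

end

theory Submission
  imports Defs
begin


lemma Rclass_char:
  assumes "e*e = (e::'a::semigroup_mult)"
  shows "g \<in> Rclass e \<longleftrightarrow> e*g = g \<and> (\<exists>u. g*u = e)"
proof
  assume "g \<in> Rclass e"
  hence eq: "rideal g = rideal e" by (simp add: Rclass_def)
  have "g \<in> rideal g" by (simp add: rideal_def)
  hence "g \<in> rideal e" using eq by simp
  hence 1: "e*g = g" using assms by (auto simp: rideal_def) (metis mult.assoc)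
  have "e \<in> rideal e" by (simp add: rideal_def)
  hence "e \<in> rideal g" using eq by simp
  hence "\<exists>u. g*u = e" using assms by (auto simp: rideal_def)
  thus "e*g = g \<and> (\<exists>u. g*u = e)" using 1 by simp
next
  assume "e*g = g \<and> (\<exists>u. g*u = e)"
  then obtain u where 1: "e*g = g" and 2: "g*u = e" by blast
  have "rideal g = rideal e"
    unfolding rideal_def using 1 2 by (auto simp: mult.assoc) (metis mult.assoc)+
  thus "g \<in> Rclass e" by (simp add: Rclass_def)
qed

lemma Lclass_char:
  assumes "e*e = (e::'a::semigroup_mult)"
  shows "g \<in> Lclass e \<longleftrightarrow> g*e = g \<and> (\<exists>v. v*g = e)"
proof
  assume "g \<in> Lclass e"
  hence eq: "lideal g = lideal e" by (simp add: Lclass_def)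
  have "g \<in> lideal g" by (simp add: lideal_def)
  hence "g \<in> lideal e" using eq by simp
  hence 1: "g*e = g" using assms by (auto simp: lideal_def mult.assoc)
  have "e \<in> lideal e" by (simp add: lideal_def)
  hence "e \<in> lideal g" using eq by simp
  hence "\<exists>u. u*g = e" using assms by (auto simp: lideal_def)
  thus "g*e = g \<and> (\<exists>u. u*g = e)" using 1 by simp
next
  assume "g*e = g \<and> (\<exists>u. u*g = e)"
  then obtain u where 1: "g*e = g" and 2: "u*g = e" by blast
  have "lideal g = lideal e"
    unfolding lideal_def using 1 2 by (auto simp: mult.assoc) (metis mult.assoc)+
  thus "g \<in> Lclass e" by (simp add: Lclass_def)
qed

lemma Hclass_char:
  assumes "e*e = (e::'a::semigroup_mult)"
  shows "g \<in> Hclass e \<longleftrightarrow> e*g = g \<and> g*e = g \<and> (\<exists>u. g*u = e) \<and> (\<exists>v. v*g = e)"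
  using Rclass_char[OF assms] Lclass_char[OF assms] by (auto simp: Hclass_def)

lemma tideal_sub:
  fixes e z :: "'a::semigroup_mult"
  shows "tideal (e*z) \<subseteq> tideal e"
  unfolding tideal_def by (auto simp: mult.assoc)

lemma tideal_mem:
  fixes e f :: "'a::semigroup_mult"
  assumes "e*e = e" "e \<in> tideal f"
  shows "\<exists>p q. e = p*f*q"
proof -
  have ee: "e = e*e*e" using assms(1) by simp
  from assms(2) show ?thesis unfolding tideal_def
  proof (elim UnE)
    assume "e \<in> {f}" thus ?thesis using ee by auto
  next
    assume "e \<in> {x*f |x. True}" then obtain x where "e = x*f" by auto
    thus ?thesis using ee by (metis mult.assoc)
  next
    assume "e \<in> {f*y |y. True}" then obtain y where "e = f*y" by auto
    thus ?thesis using ee by (metis mult.assoc)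
  next
    assume "e \<in> {x*f*y |x y. True}" then obtain x y where "e = x*f*y" by auto
    thus ?thesis by blast
  qed
qed

fun pw :: "'a::semigroup_mult \<Rightarrow> nat \<Rightarrow> 'a" where
  "pw x 0 = x" | "pw x (Suc n) = pw x n * x"

lemma pw_add: "pw x (Suc (m + n)) = pw x m * pw x n"
  by (induction n) (auto simp: mult.assoc)

lemma pw_Suc': "pw x (Suc n) = x * pw x n"
  using pw_add[of x 0 n] by simp

lemma pw_right: "pw x n = x \<or> (\<exists>y. pw x n = y * x)"
  by (cases n) auto

lemma pw_left: "pw x n = x \<or> (\<exists>y. pw x n = x * y)"
  by (cases n) (simp, metis pw_Suc')

lemma pw_idem:
  fixes x :: "'a::{finite,semigroup_mult}"
  shows "\<exists>n. pw x n * pw x n = pw x n"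
proof -
  have "\<not> inj (pw x)"
  proof
    assume "inj (pw x)"
    hence "infinite (range (pw x))" using finite_imageD by blast
    thus False by simp
  qed
  then obtain i j where ij: "i < j" "pw x i = pw x j"
    unfolding inj_def by (metis linorder_neqE_nat)
  define p where "p = j - i"
  have p0: "p > 0" and jp: "j = i + p" using ij by (auto simp: p_def)
  have per: "pw x (i + k) = pw x (j + k)" for k
    by (induction k) (use ij in auto)
  have per2: "pw x (i + k + m*p) = pw x (i + k)" for k m
  proof (induction m)
    case 0 then show ?case by simp
  next
    case (Suc m)
    have "i + k + Suc m * p = j + (k + m*p)" using jp by simp
    hence "pw x (i + k + Suc m * p) = pw x (i + (k + m*p))" using per by metis
    also have "... = pw x (i + k)" using Suc by (simp add: add.assoc)
    finally show ?case .
  qed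
  define k where "k = p*(i+1) - Suc i"
  have pk: "Suc (i + k) = (i+1)*p" using p0 unfolding k_def
    by (simp add: algebra_simps) (metis One_nat_def Suc_le_eq add_Suc_right le_add_diff_inverse mult_Suc_right mult_le_mono2 nat_mult_1_right p0 mult.commute less_eq_Suc_le Suc_eq_plus1 add.commute)
  have "pw x (i+k) * pw x (i+k) = pw x (Suc ((i+k) + (i+k)))" by (rule pw_add[symmetric])
  also have "Suc ((i+k) + (i+k)) = i + k + (i+1)*p" using pk by simp
  also have "pw x (i + k + (i+1)*p) = pw x (i+k)" by (rule per2)
  finally show ?thesis by blast
qed

lemma SL_iter:
  fixes e p q :: "'a::semigroup_mult"
  assumes "e = p*e*q"
  shows "e = pw p k * e * pw q k"
proof (induction k)
  case 0 then show ?case using assms by simp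
next
  case (Suc k)
  have "e = pw p k * (p*e*q) * pw q k" using Suc assms by metis
  also have "... = (pw p k * p) * e * (q * pw q k)" by (simp add: mult.assoc)
  also have "... = pw p (Suc k) * e * pw q (Suc k)" using pw_Suc'[of q k] by simp
  finally show ?case .
qed

lemma SL_right:
  fixes e p q :: "'a::{finite,semigroup_mult}"
  assumes "e = p*e*q"
  shows "\<exists>w. e = e*q*w \<or> e = e*q"
proof -
  obtain k where k: "pw q k * pw q k = pw q k" using pw_idem by blast
  have e1: "e = pw p k * e * pw q k" by (rule SL_iter[OF assms])
  hence "e = pw p k * e * (pw q k * pw q k)" using k by simp
  also have "... = (pw p k * e * pw q k) * pw q k" by (simp add: mult.assoc)
  also have "... = e * pw q k" using e1 by simp
  finally have "e = e * pw q k" .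
  thus ?thesis using pw_left[of q k] by (metis mult.assoc)
qed

lemma SL_left:
  fixes e p q :: "'a::{finite,semigroup_mult}"
  assumes "e = p*e*q"
  shows "\<exists>v. e = v*p*e \<or> e = p*e"
proof -
  obtain k where k: "pw p k * pw p k = pw p k" using pw_idem by blast
  have e1: "e = pw p k * e * pw q k" by (rule SL_iter[OF assms])
  hence "e = (pw p k * pw p k) * e * pw q k" using k by simp
  also have "... = pw p k * (pw p k * e * pw q k)" by (simp add: mult.assoc)
  also have "... = pw p k * e" using e1 by simp
  finally have "e = pw p k * e" .
  thus ?thesis using pw_right[of p k] by (metis mult.assoc)
qed




locale P27 =
  fixes J :: "'a::{finite, semigroup_mult} set" and e :: 'a
    and Om :: "'b set" and act :: "'b \<Rightarrow> 'a \<Rightarrow> 'b option"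
  assumes isJ: "is_Jclass J" and eJ: "e \<in> J" and idem: "e*e = e"
    and pS: "partial_Sset Om act" and ss: "semisimple Om act"
    and apx: "\<forall>x\<in>Om. apex act (strong_orbit Om act x) J"
begin

abbreviation "X \<equiv> act_image Om act e"
abbreviation "T \<equiv> tensor X act e"
abbreviation "Tact \<equiv> tact X act e"
abbreviation "tc \<equiv> tcl X act e"
abbreviation "R \<equiv> Rclass e"
abbreviation "H \<equiv> Hclass e"

definition th :: "('b \<times> 'a) set \<Rightarrow> 'b" where
  "th C = the (act (fst (SOME p. p \<in> C)) (snd (SOME p. p \<in> C)))"

lemmas Rc = Rclass_char[OF idem]
lemmas Hc = Hclass_char[OF idem]

lemma closed: "x \<in> Om \<Longrightarrow> act x s = Some y \<Longrightarrow> y \<in> Om"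
  using pS unfolding partial_Sset_def by blast

lemma assoc: "x \<in> Om \<Longrightarrow> act x (s*t) = Option.bind (act x s) (\<lambda>y. act y t)"
  using pS unfolding partial_Sset_def by blast

lemma assoc2: "x \<in> Om \<Longrightarrow> act x s = Some y \<Longrightarrow> act x (s*t) = act y t"
  using assoc by simp

lemma assocD: "x \<in> Om \<Longrightarrow> act x (s*t) = Some z \<Longrightarrow> \<exists>y. act x s = Some y \<and> act y t = Some z"
  using assoc by (simp add: bind_eq_Some_conv)

lemma X_fix: "x \<in> X \<Longrightarrow> act x e = Some x \<and> x \<in> Om"
proof -
  assume "x \<in> X"
  then obtain z where z: "z \<in> Om" "act z e = Some x" by (auto simp: act_image_def)
  have "act z (e*e) = act x e" by (rule assoc2[OF z])
  thus ?thesis using z idem closed by simp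
qed

lemma X_I: "x \<in> Om \<Longrightarrow> act x e = Some x \<Longrightarrow> x \<in> X"
  by (auto simp: act_image_def)

lemma R_act: "x \<in> X \<Longrightarrow> r \<in> R \<Longrightarrow> \<exists>y. act x r = Some y"
proof -
  assume x: "x \<in> X" and r: "r \<in> R"
  obtain u where u: "r*u = e" using r Rc by blast
  have "act x (r*u) = Some x" using u X_fix[OF x] by simp
  thus ?thesis using assoc X_fix[OF x] by (cases "act x r") auto
qed

lemma act_pw: "x \<in> Om \<Longrightarrow> act x c = Some x \<Longrightarrow> act x (pw c n) = Some x"
  by (induction n) (auto simp: assoc)

lemma key:
  assumes x: "x \<in> Om" and a: "e*a = a" and xa: "act x (a*u) = Some x"
  shows "a \<in> R"
proof -
  define c where "c = a*u"
  obtain n where n: "pw c n * pw c n = pw c n" using pw_idem by blast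
  define f where "f = pw c n"
  have xf: "act x f = Some x" unfolding f_def using act_pw x xa c_def by simp
  define Ob where "Ob = strong_orbit Om act x"
  have xO: "x \<in> Ob" using x by (simp add: Ob_def strong_orbit_def)
  have hit: "Jclass f \<in> hitting_Jclasses act Ob"
    unfolding hitting_Jclasses_def is_Jclass_def orbit_hit_def using xO xf
    by (auto simp: Jclass_def)
  obtain z where fz: "f = a*z" using pw_left[of c n] unfolding f_def c_def by (metis mult.assoc)
  have "f = e*(z')" if "z' = a*z" for z' using fz a that by (metis mult.assoc)
  hence "tideal f \<subseteq> tideal e" using tideal_sub by metis
  hence le: "Jclass_le (Jclass f) J" unfolding Jclass_le_def using eJ
    by (auto simp: Jclass_def)
  have "minimal_hitting act Ob J" using apx x unfolding Ob_def apex_def by blast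
  hence "Jclass f = J" using hit le unfolding minimal_hitting_def by blast
  hence "tideal e = tideal f" using eJ by (auto simp: Jclass_def)
  hence "e \<in> tideal f" by (auto simp: tideal_def)
  then obtain p q where pq: "e = p*f*q" using tideal_mem idem by blast
  have ef: "e*f = f" using fz a by (metis mult.assoc)
  have "e = p*e*(f*q)" using pq ef by (metis mult.assoc)
  then obtain w where "e = e*(f*q)*w \<or> e = e*(f*q)" using SL_right by blast
  hence "\<exists>y. a*y = e" using ef fz by (metis mult.assoc)
  thus ?thesis using Rc a by blast
qed

lemma U1:
  assumes x: "x \<in> X" and r: "r \<in> R" and xs: "act x (r*s) = Some y"
  shows "r*s \<in> R"
proof -
  obtain w where w: "act x r = Some w" using R_act x r by blast
  have xO: "x \<in> Om" using X_fix x by blast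
  have wO: "w \<in> Om" using closed xO w by blast
  have ws: "act w s = Some y" using assoc2[OF xO w] xs by simp
  have "w \<in> strong_orbit Om act w" using wO by (simp add: strong_orbit_def)
  hence "y \<in> strong_orbit Om act w" using ss wO ws unfolding semisimple_def invariant_orbit_def by blast
  hence "orbit1 act w = orbit1 act y" by (simp add: strong_orbit_def)
  moreover have "w \<in> orbit1 act w" by (simp add: orbit1_def)
  ultimately have "w \<in> orbit1 act y" by simp
  hence wy: "w = y \<or> (\<exists>t. act y t = Some w)" by (auto simp: orbit1_def)
  obtain u where u: "r*u = e" using r Rc by blast
  have wu: "act w u = Some x" using assoc2[OF xO w, of u] u X_fix[OF x] by simp
  have er: "e*r = r" using r Rc by blast
  have ers: "e*(r*s) = r*s" using er by (metis mult.assoc)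
  from wy show ?thesis
  proof
    assume "w = y"
    have "act x ((r*s)*u) = act w (s*u)" using assoc2[OF xO w] by (simp add: mult.assoc)
    also have "... = act y u" using assoc2[OF wO ws] by simp
    finally have "act x ((r*s)*u) = Some x" using wu \<open>w = y\<close> by simp
    thus ?thesis using key[OF xO ers] by blast
  next
    assume "\<exists>t. act y t = Some w"
    then obtain t where t: "act y t = Some w" by blast
    have yO: "y \<in> Om" using closed wO ws by blast
    have "act x ((r*s)*(t*u)) = act w (s*(t*u))" using assoc2[OF xO w] by (simp add: mult.assoc)
    also have "... = act y (t*u)" using assoc2[OF wO ws] by simp
    also have "... = act w u" using assoc2[OF yO t] by simp
    finally have "act x ((r*s)*(t*u)) = Some x" using wu by simp
    thus ?thesis using key[OF xO ers] by blast
  qed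
qed


lemma tc_mem: "(x',r') \<in> tc x r \<longleftrightarrow> x' \<in> X \<and> r' \<in> R \<and>
   (\<exists>g\<in>H. \<exists>h\<in>H. g*h = e \<and> h*g = e \<and> act x g = Some x' \<and> r' = h*r)"
  by (simp add: tcl_def)

lemma e_H: "e \<in> H" using Hc idem by blast

lemma self_in: "x \<in> X \<Longrightarrow> r \<in> R \<Longrightarrow> (x, r) \<in> tc x r"
proof -
  assume a: "x \<in> X" "r \<in> R"
  have 1: "act x e = Some x" using X_fix[OF a(1)] by simp
  have 2: "e*r = r" using a(2) by (simp add: Rc)
  have "\<exists>g\<in>H. \<exists>h\<in>H. g*h = e \<and> h*g = e \<and> act x g = Some x \<and> r = h*r"
    using idem 1 2 by (intro bexI[OF _ e_H]) simp
  thus ?thesis unfolding tc_mem using a by simp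
qed

lemma H_mult: "g1 \<in> H \<Longrightarrow> g2 \<in> H \<Longrightarrow> g1*g2 \<in> H"
proof -
  assume a: "g1 \<in> H" "g2 \<in> H"
  have a1: "e*g1 = g1 \<and> g1*e = g1 \<and> (\<exists>u. g1*u = e) \<and> (\<exists>v. v*g1 = e)" using a(1) by (simp add: Hc)
  have a2: "e*g2 = g2 \<and> g2*e = g2 \<and> (\<exists>u. g2*u = e) \<and> (\<exists>v. v*g2 = e)" using a(2) by (simp add: Hc)
  obtain u1 v1 u2 v2 where 1: "e*g1 = g1" "g1*e = g1" "g1*u1 = e" "v1*g1 = e"
    and 2: "e*g2 = g2" "g2*e = g2" "g2*u2 = e" "v2*g2 = e" using a1 a2 by blast
  have "e*(g1*g2) = (e*g1)*g2" by (simp add: mult.assoc)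
  hence "e*(g1*g2) = g1*g2" using 1 by simp
  moreover have "(g1*g2)*e = g1*g2" using 2 by (simp add: mult.assoc)
  moreover have "(g1*g2)*(u2*u1) = g1*((g2*u2)*u1)" by (simp add: mult.assoc)
  hence "(g1*g2)*(u2*u1) = e" using 1 2 by (simp add: mult.assoc[symmetric])
  moreover have "(v2*v1)*(g1*g2) = v2*((v1*g1)*g2)" by (simp add: mult.assoc)
  hence "(v2*v1)*(g1*g2) = e" using 1 2 by simp
  ultimately show ?thesis using Hc by blast
qed

lemma HR_mult: "h \<in> H \<Longrightarrow> r \<in> R \<Longrightarrow> h*r \<in> R"
proof -
  assume a: "h \<in> H" "r \<in> R"
  have a1: "e*h = h \<and> h*e = h \<and> (\<exists>u. h*u = e)" using a(1) by (simp add: Hc)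
  have a2: "e*r = r \<and> (\<exists>u. r*u = e)" using a(2) by (simp add: Rc)
  obtain u u' where 1: "e*h = h" "h*e = h" "h*u' = e" and 2: "e*r = r" "r*u = e"
    using a1 a2 by blast
  have "e*(h*r) = (e*h)*r" by (simp add: mult.assoc)
  hence "e*(h*r) = h*r" using 1 by simp
  moreover have "(h*r)*(u*u') = h*(r*u)*u'" by (simp add: mult.assoc)
  hence "(h*r)*(u*u') = e" using 1 2 by simp
  ultimately show ?thesis using Rc by blast
qed

lemma W:
  assumes x: "x \<in> X" and r: "r \<in> R" and p: "p \<in> tc x r"
  shows "act (fst p) (snd p) = act x r"
proof -
  obtain x' r' where pp: "p = (x', r')" by force
  then obtain g h where gh: "g*h = e" "act x g = Some x'" "r' = h*r"
    using p tc_mem by blast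
  have xO: "x \<in> Om" using X_fix x by blast
  have "act x' (h*r) = act x (g*(h*r))" using assoc2[OF xO gh(2)] by simp
  also have "g*(h*r) = (g*h)*r" by (simp add: mult.assoc)
  also have "... = r" using gh(1) r by (simp add: Rc)
  finally show ?thesis using pp gh by simp
qed

lemma Orb_sub:
  assumes x: "x \<in> X" and r: "r \<in> R" and p: "(x', r') \<in> tc x r"
  shows "tc x' r' \<subseteq> tc x r"
proof
  fix yq assume yq: "yq \<in> tc x' r'"
  obtain y q where yqq: "yq = (y, q)" by force
  obtain g h where g: "g \<in> H" "h \<in> H" "g*h = e" "h*g = e" "act x g = Some x'" "r' = h*r"
    using p tc_mem by blast
  obtain g2 h2 where g2: "g2 \<in> H" "h2 \<in> H" "g2*h2 = e" "h2*g2 = e" "act x' g2 = Some y" "q = h2*r'"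
    and yX: "y \<in> X" and qR: "q \<in> R"
    using yq yqq tc_mem by blast
  have xO: "x \<in> Om" using X_fix x by blast
  have 1: "act x (g*g2) = Some y" using assoc2[OF xO g(5)] g2 by simp
  have 2: "q = (h2*h)*r" using g g2 by (simp add: mult.assoc)
  have ge: "g*e = g" "h2*e = h2" using g(1) g2(2) by (simp_all add: Hc)
  have "(g*g2)*(h2*h) = g*(g2*h2)*h" by (simp add: mult.assoc)
  hence 3: "(g*g2)*(h2*h) = e" using g g2 ge by simp
  have "(h2*h)*(g*g2) = h2*(h*g)*g2" by (simp add: mult.assoc)
  hence 4: "(h2*h)*(g*g2) = e" using g g2 ge by simp
  show "yq \<in> tc x r" unfolding yqq tc_mem using yX qR 1 2 3 4 H_mult g g2 by blast
qed

lemma Orb_sym: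
  assumes x: "x \<in> X" and r: "r \<in> R" and p: "(x', r') \<in> tc x r"
  shows "(x, r) \<in> tc x' r'"
proof -
  obtain g h where g: "g \<in> H" "h \<in> H" "g*h = e" "h*g = e" "act x g = Some x'" "r' = h*r"
    using p tc_mem by blast
  have xO: "x \<in> Om" using X_fix x by blast
  have x'O: "x' \<in> Om" using closed xO g by blast
  have "act x' h = act x (g*h)" using assoc2[OF xO g(5)] by simp
  hence 1: "act x' h = Some x" using g X_fix x by simp
  have "g*r' = (g*h)*r" using g(6) by (simp add: mult.assoc)
  hence 2: "r = g*r'" using g r Rc by simp
  show ?thesis unfolding tc_mem using 1 2 g x r by blast
qed

lemma Orb:
  assumes x: "x \<in> X" and r: "r \<in> R" and p: "(x', r') \<in> tc x r"
  shows "tc x' r' = tc x r"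
proof
  show "tc x' r' \<subseteq> tc x r" by (rule Orb_sub[OF assms])
  have x': "x' \<in> X" "r' \<in> R" using p tc_mem by auto
  show "tc x r \<subseteq> tc x' r'" by (rule Orb_sub[OF x' Orb_sym[OF assms]])
qed

lemma T_mem: "C \<in> T \<longleftrightarrow> (\<exists>x r. C = tc x r \<and> x \<in> X \<and> r \<in> R)"
  by (auto simp: tensor_def)

lemma some_T:
  assumes C: "C \<in> T"
  shows "(SOME p. p \<in> C) \<in> C \<and> fst (SOME p. p \<in> C) \<in> X \<and> snd (SOME p. p \<in> C) \<in> R
     \<and> C = tc (fst (SOME p. p \<in> C)) (snd (SOME p. p \<in> C))"
proof -
  obtain x r where xr: "C = tc x r" "x \<in> X" "r \<in> R" using C T_mem by blast
  have "\<exists>p. p \<in> C" using self_in xr by blast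
  hence pC: "(SOME p. p \<in> C) \<in> C" by (rule someI_ex)
  obtain x' r' where pp: "(SOME p. p \<in> C) = (x', r')" by force
  have "x' \<in> X" "r' \<in> R" using pC pp xr tc_mem by auto
  moreover have "C = tc x' r'" using Orb[OF xr(2,3)] pC pp xr by simp
  ultimately show ?thesis using pC pp by simp
qed

lemma th_tc: "x \<in> X \<Longrightarrow> r \<in> R \<Longrightarrow> th (tc x r) = the (act x r)"
proof -
  assume a: "x \<in> X" "r \<in> R"
  have "\<exists>p. p \<in> tc x r" using self_in a by blast
  hence "(SOME p. p \<in> tc x r) \<in> tc x r" by (rule someI_ex)
  thus ?thesis unfolding th_def using W a by simp
qed

lemma th_T: "C \<in> T \<Longrightarrow> act (fst (SOME p. p \<in> C)) (snd (SOME p. p \<in> C)) = Some (th C) \<and> th C \<in> Om"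
proof -
  assume C: "C \<in> T"
  let ?p = "SOME p. p \<in> C"
  obtain y where y: "act (fst ?p) (snd ?p) = Some y" using R_act some_T[OF C] by blast
  have "fst ?p \<in> Om" using some_T[OF C] X_fix by blast
  thus ?thesis using y closed unfolding th_def by simp
qed

lemma Tact_eq: "C \<in> T \<Longrightarrow> Tact C s = (if snd (SOME p. p \<in> C) * s \<in> R
   then Some (tc (fst (SOME p. p \<in> C)) (snd (SOME p. p \<in> C) * s)) else None)"
  by (simp add: tact_def Let_def)

lemma Tact_T: "C \<in> T \<Longrightarrow> Tact C s = Some D \<Longrightarrow> D \<in> T"
proof -
  assume C: "C \<in> T" and D: "Tact C s = Some D"
  let ?p = "SOME p. p \<in> C"
  have "snd ?p * s \<in> R" and "D = tc (fst ?p) (snd ?p * s)"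
    using D Tact_eq[OF C] by (auto split: if_splits)
  thus ?thesis using some_T[OF C] T_mem by blast
qed

lemma eqv: "C \<in> T \<Longrightarrow> map_option th (Tact C s) = act (th C) s"
proof -
  assume C: "C \<in> T"
  let ?p = "SOME p. p \<in> C"
  have x: "fst ?p \<in> X" and r: "snd ?p \<in> R" using some_T[OF C] by auto
  have xO: "fst ?p \<in> Om" using X_fix x by blast
  have 1: "act (th C) s = act (fst ?p) (snd ?p * s)" using assoc2[OF xO] th_T[OF C] by simp
  show ?thesis
  proof (cases "snd ?p * s \<in> R")
    case True
    then obtain y where "act (fst ?p) (snd ?p * s) = Some y" using R_act x by blast
    thus ?thesis using Tact_eq[OF C] True th_tc[OF x True] 1 by simp
  next
    case False
    hence "act (fst ?p) (snd ?p * s) = None" using U1[OF x r] by (cases "act (fst ?p) (snd ?p * s)") auto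
    thus ?thesis using Tact_eq[OF C] False 1 by simp
  qed
qed

end



context P27 begin

lemma orb_trans: "x \<in> Om \<Longrightarrow> y \<in> orbit1 act x \<Longrightarrow> orbit1 act y \<subseteq> orbit1 act x"
proof
  fix z assume x: "x \<in> Om" and y: "y \<in> orbit1 act x" and z: "z \<in> orbit1 act y"
  show "z \<in> orbit1 act x"
  proof (cases "y = x")
    case True thus ?thesis using z by simp
  next
    case False
    then obtain s where s: "act x s = Some y" using y by (auto simp: orbit1_def)
    show ?thesis
    proof (cases "z = y")
      case True thus ?thesis using y by simp
    next
      case False
      then obtain t where t: "act y t = Some z" using z by (auto simp: orbit1_def)
      have "act x (s*t) = Some z" using assoc2[OF x s] t by simp
      thus ?thesis by (auto simp: orbit1_def)
    qed
  qed
qed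

lemma orbit1_self: "x \<in> orbit1 act x" by (simp add: orbit1_def)

lemma surj_rep:
  assumes w: "w \<in> Om"
  shows "\<exists>z r. z \<in> X \<and> r \<in> R \<and> act z r = Some w"
proof -
  define Ob where "Ob = strong_orbit Om act w"
  have "minimal_hitting act Ob J" using apx w unfolding Ob_def apex_def by blast
  hence "J \<in> hitting_Jclasses act Ob" by (simp add: minimal_hitting_def)
  then obtain s x1 y1 where s: "s \<in> J" and x1: "x1 \<in> Ob" and y1: "y1 \<in> Ob" and xs: "act x1 s = Some y1"
    unfolding hitting_Jclasses_def orbit_hit_def by blast
  obtain a0 where J: "J = Jclass a0" using isJ by (auto simp: is_Jclass_def)
  have "tideal s = tideal e" using s eJ J by (simp add: Jclass_def)
  moreover have "s \<in> tideal s" by (simp add: tideal_def)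
  ultimately have "s \<in> tideal e" by simp
  hence scases: "s = e \<or> (\<exists>x. s = x*e) \<or> (\<exists>y. s = e*y) \<or> (\<exists>x y. s = x*e*y)"
    by (auto simp: tideal_def)
  have x1O: "x1 \<in> Om" and y1O: "y1 \<in> Om" using x1 y1 by (auto simp: Ob_def strong_orbit_def)
  have xX: "m \<in> Om \<Longrightarrow> act m e = Some z \<Longrightarrow> z \<in> X" for m z by (auto simp: act_image_def)
  have "\<exists>z. z \<in> X \<and> z \<in> orbit1 act x1 \<and> y1 \<in> orbit1 act z"
  proof -
    { assume "s = e"
      hence ?thesis using xs x1O xX[of x1 y1] by (auto simp: orbit1_def) }
    moreover
    { fix x assume "s = x*e"
      then obtain m where m: "act x1 x = Some m" "act m e = Some y1" using assocD[OF x1O] xs by blast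
      have "m \<in> Om" using closed x1O m by blast
      hence ?thesis using xs xX[of m y1] m by (auto simp: orbit1_def) }
    moreover
    { fix y assume "s = e*y"
      then obtain z where z: "act x1 e = Some z" "act z y = Some y1" using assocD[OF x1O] xs by blast
      hence ?thesis using xX[of x1 z] x1O by (auto simp: orbit1_def) }
    moreover
    { fix x y assume "s = x*e*y"
      then obtain z where z: "act x1 (x*e) = Some z" "act z y = Some y1" using assocD[OF x1O] xs by blast
      then obtain m where m: "act x1 x = Some m" "act m e = Some z" using assocD[OF x1O] by blast
      have "m \<in> Om" using closed x1O m by blast
      hence "z \<in> X" using xX[of m z] m by blast
      hence ?thesis using z by (auto simp: orbit1_def) }
    ultimately show ?thesis using scases by blast
  qed
  then obtain z where zX: "z \<in> X" and zx: "z \<in> orbit1 act x1" and yz: "y1 \<in> orbit1 act z" by blast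
  have zO: "z \<in> Om" and ze: "act z e = Some z" using X_fix zX by auto
  have o1: "orbit1 act z \<subseteq> orbit1 act x1" using orb_trans[OF x1O zx] .
  have o2: "orbit1 act y1 \<subseteq> orbit1 act z" using orb_trans[OF zO yz] .
  have ow: "orbit1 act w = orbit1 act x1" "orbit1 act w = orbit1 act y1"
    using x1 y1 by (auto simp: Ob_def strong_orbit_def)
  have oz: "orbit1 act z = orbit1 act w" using o1 o2 ow by blast
  have wz: "w \<in> orbit1 act z" using oz orbit1_self by metis
  have zw: "z \<in> orbit1 act w" using oz orbit1_self by metis
  show ?thesis
  proof (cases "w = z")
    case True
    thus ?thesis using zX ze e_H by (intro exI[of _ z] exI[of _ e]) (simp add: Hclass_def)
  next
    case False
    then obtain t where t: "act z t = Some w" using wz by (auto simp: orbit1_def)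
    have zr: "act z (e*t) = Some w" using assoc2[OF zO ze] t by simp
    have er: "e*(e*t) = e*t" using idem by (simp add: mult.assoc[symmetric])
    have "\<exists>u. act z ((e*t)*u) = Some z"
    proof (cases "z = w")
      case True
      have "act z ((e*t)*e) = act w e" using assoc2[OF zO zr] by simp
      thus ?thesis using True ze by auto
    next
      case False
      then obtain t' where "act w t' = Some z" using zw by (auto simp: orbit1_def)
      thus ?thesis using assoc2[OF zO zr] by auto
    qed
    then obtain u where "act z ((e*t)*u) = Some z" by blast
    hence "e*t \<in> R" using key[OF zO er] by blast
    thus ?thesis using zX zr by blast
  qed
qed

lemma surj_th: "th ` T = Om"
proof
  show "th ` T \<subseteq> Om" using th_T by blast
  show "Om \<subseteq> th ` T"
  proof
    fix w assume "w \<in> Om"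
    then obtain z r where zr: "z \<in> X" "r \<in> R" "act z r = Some w" using surj_rep by blast
    have "tc z r \<in> T" using zr T_mem by blast
    moreover have "th (tc z r) = w" using th_tc[OF zr(1,2)] zr(3) by simp
    ultimately show "w \<in> th ` T" by force
  qed
qed

lemma Te_form:
  assumes D: "D \<in> act_image T Tact e"
  shows "D = tc (th D) e \<and> th D \<in> X"
proof -
  obtain C where C: "C \<in> T" and CD: "Tact C e = Some D" using D by (auto simp: act_image_def)
  let ?p = "SOME p. p \<in> C"
  have x: "fst ?p \<in> X" and r: "snd ?p \<in> R" using some_T[OF C] by auto
  define a where "a = snd ?p * e"
  have aR: "a \<in> R" and Da: "D = tc (fst ?p) a"
    using CD Tact_eq[OF C] unfolding a_def by (auto split: if_splits)
  have ae: "a*e = a" unfolding a_def using idem by (simp add: mult.assoc)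
  have ea: "e*a = a" using aR by (simp add: Rc)
  obtain u where u: "a*u = e" using aR by (auto simp: Rc)
  have "e = a*e*u" using u ae by simp
  then obtain v where "e = v*a*e \<or> e = a*e" using SL_left by blast
  hence "\<exists>v. v*a = e" using ae idem by (metis mult.assoc)
  then obtain v where v: "v*a = e" by blast
  define b where "b = v*e"
  have be: "b = e*u" unfolding b_def using u v by (metis mult.assoc)
  have ab: "a*b = e" using be u ae by (metis mult.assoc)
  have ba: "b*a = e" unfolding b_def using v ea by (metis mult.assoc)
  have aH: "a \<in> H" using ae ea u v by (auto simp: Hc)
  have bH: "b \<in> H"
  proof -
    have "e*b = b" using be idem by (metis mult.assoc)
    moreover have "b*e = b" unfolding b_def using idem by (simp add: mult.assoc)
    ultimately show ?thesis using ab ba by (auto simp: Hc)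
  qed
  obtain w where w: "act (fst ?p) a = Some w" using R_act x aR by blast
  have xO: "fst ?p \<in> Om" using X_fix x by blast
  have wO: "w \<in> Om" using closed xO w by blast
  have "act w e = act (fst ?p) (a*e)" using assoc2[OF xO w] by simp
  hence we: "act w e = Some w" using ae w by simp
  have wX: "w \<in> X" using X_I wO we by blast
  have eR: "e \<in> R" using e_H by (simp add: Hclass_def)
  have "\<exists>g\<in>H. \<exists>h\<in>H. g*h = e \<and> h*g = e \<and> act (fst ?p) g = Some w \<and> e = h*a"
    apply (rule bexI[OF _ aH], rule bexI[OF _ bH])
    using ab ba w by simp
  hence "(w, e) \<in> tc (fst ?p) a" unfolding tc_mem using wX eR by blast
  hence "tc w e = D" using Orb[OF x aR] Da by simp
  moreover have "th (tc w e) = w" using th_tc[OF wX eR] we by simp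
  ultimately show ?thesis using wX by auto
qed

lemma inj_th: "inj_on th (act_image T Tact e)"
  by (rule inj_onI) (metis Te_form)

lemma part1: "th ` T = Om \<and> equivariant T Tact act th \<and> inj_on th (act_image T Tact e)"
  using surj_th inj_th eqv by (simp add: equivariant_def)

end



lemma green_equiv: "equiv A (green_rel A act' e')"
  unfolding equiv_def refl_on_def sym_def trans_def green_rel_def by auto

lemma opt_inj:
  assumes "inj_on f A" "set_option o1 \<subseteq> A" "set_option o2 \<subseteq> A"
  shows "o1 = o2 \<longleftrightarrow> map_option f o1 = map_option f o2"
  using assms by (cases o1; cases o2) (auto simp: inj_on_def)

context P27 begin

abbreviation "GT \<equiv> green_rel T Tact e"
abbreviation "GO \<equiv> green_rel Om act e"

lemma mapF: "C \<in> T \<Longrightarrow> map_option th (Option.bind (Tact C s) (\<lambda>z. Tact z e))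
    = Option.bind (act (th C) s) (\<lambda>z. act z e)"
proof -
  assume C: "C \<in> T"
  show ?thesis
  proof (cases "Tact C s")
    case None
    thus ?thesis using eqv[OF C, of s] by simp
  next
    case (Some D)
    have DT: "D \<in> T" using Tact_T[OF C Some] .
    have "act (th C) s = Some (th D)" using eqv[OF C, of s] Some by simp
    thus ?thesis using Some eqv[OF DT, of e] by simp
  qed
qed

lemma F_in: "C \<in> T \<Longrightarrow> set_option (Option.bind (Tact C s) (\<lambda>z. Tact z e)) \<subseteq> act_image T Tact e"
proof
  fix D' assume C: "C \<in> T" and D': "D' \<in> set_option (Option.bind (Tact C s) (\<lambda>z. Tact z e))"
  then obtain D where D: "Tact C s = Some D" "Tact D e = Some D'"
    by (cases "Tact C s") auto
  have "D \<in> T" using Tact_T[OF C D(1)] .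
  thus "D' \<in> act_image T Tact e" using D(2) by (auto simp: act_image_def)
qed

lemma rel_iff:
  assumes C: "C \<in> T" and D: "D \<in> T"
  shows "(C, D) \<in> GT \<longleftrightarrow> (th C, th D) \<in> GO"
proof -
  have "Option.bind (Tact C s) (\<lambda>z. Tact z e) = Option.bind (Tact D s) (\<lambda>z. Tact z e) \<longleftrightarrow>
        Option.bind (act (th C) s) (\<lambda>z. act z e) = Option.bind (act (th D) s) (\<lambda>z. act z e)" for s
    using opt_inj[OF inj_th F_in[OF C] F_in[OF D]] mapF[OF C] mapF[OF D] by simp
  moreover have "th C \<in> Om" "th D \<in> Om" using th_T C D by auto
  ultimately show ?thesis using C D unfolding green_rel_def by auto
qed

lemma cong:
  assumes ab: "(a, b) \<in> GO" and a': "act a s = Some a'"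
  shows "\<exists>b'. act b s = Some b' \<and> (a', b') \<in> GO"
proof -
  have aO: "a \<in> Om" and bO: "b \<in> Om" using ab by (auto simp: green_rel_def)
  obtain z r where zr: "z \<in> X" "r \<in> R" "act z r = Some a" using surj_rep[OF aO] by blast
  have zO: "z \<in> Om" using X_fix zr by blast
  have "act z (r*s) = Some a'" using assoc2[OF zO zr(3)] a' by simp
  hence "r*s \<in> R" using U1[OF zr(1,2)] by blast
  then obtain u where u: "(r*s)*u = e" by (auto simp: Rc)
  have "act a (s*u) = act z (r*(s*u))" using assoc2[OF zO zr(3)] by simp
  also have "r*(s*u) = e" using u by (simp add: mult.assoc)
  finally have "act a (s*u) = Some z" using X_fix[OF zr(1)] by simp
  hence "Option.bind (act a (s*u)) (\<lambda>z. act z e) = Some z" using X_fix[OF zr(1)] by simp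
  hence "Option.bind (act b (s*u)) (\<lambda>z. act z e) \<noteq> None" using ab by (auto simp: green_rel_def)
  then obtain m where "act b (s*u) = Some m" by (cases "act b (s*u)") auto
  then obtain b' where b': "act b s = Some b'" using assocD[OF bO] by blast
  have a'O: "a' \<in> Om" using closed aO a' by blast
  have b'O: "b' \<in> Om" using closed bO b' by blast
  have "Option.bind (act a' t) (\<lambda>z. act z e) = Option.bind (act b' t) (\<lambda>z. act z e)" for t
  proof -
    have "Option.bind (act a' t) (\<lambda>z. act z e) = Option.bind (act a (s*t)) (\<lambda>z. act z e)"
      using assoc2[OF aO a'] by simp
    also have "... = Option.bind (act b (s*t)) (\<lambda>z. act z e)" using ab by (auto simp: green_rel_def)
    also have "... = Option.bind (act b' t) (\<lambda>z. act z e)" using assoc2[OF bO b'] by simp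
    finally show ?thesis .
  qed
  thus ?thesis using a'O b'O b' by (auto simp: green_rel_def)
qed

lemma cong_None:
  assumes ab: "(a, b) \<in> GO" and a': "act a s = None"
  shows "act b s = None"
proof (rule ccontr)
  assume "act b s \<noteq> None"
  then obtain b' where "act b s = Some b'" by auto
  moreover have "(b, a) \<in> GO" using ab by (auto simp: green_rel_def)
  ultimately show False using cong a' by fastforce
qed

definition psi :: "'b \<Rightarrow> ('b \<times> 'a) set set" where
  "psi w = gcl T Tact e (SOME C. C \<in> T \<and> th C = w)"

lemma eqvT: "equiv T GT" by (rule green_equiv)
lemma eqvO: "equiv Om GO" by (rule green_equiv)

lemma psi_eq: "C \<in> T \<Longrightarrow> psi (th C) = GT `` {C}"
proof -
  assume C: "C \<in> T"
  have "\<exists>C'. C' \<in> T \<and> th C' = th C" using C by blast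
  hence C0: "(SOME C'. C' \<in> T \<and> th C' = th C) \<in> T \<and> th (SOME C'. C' \<in> T \<and> th C' = th C) = th C"
    by (rule someI_ex)
  have "th C \<in> Om" using th_T C by blast
  hence "(th C, th C) \<in> GO" using eqvO by (auto simp: equiv_def refl_on_def)
  hence "((SOME C'. C' \<in> T \<and> th C' = th C), C) \<in> GT" using rel_iff C0 C by simp
  hence "GT `` {SOME C'. C' \<in> T \<and> th C' = th C} = GT `` {C}" using equiv_class_eq[OF eqvT] by blast
  thus ?thesis by (simp add: psi_def gcl_def)
qed

lemma Om_th: "w \<in> Om \<Longrightarrow> \<exists>C\<in>T. th C = w" by (metis imageE surj_th)

lemma psi_img: "psi ` Om = green_quot T Tact e"
proof
  show "psi ` Om \<subseteq> green_quot T Tact e"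
  proof
    fix Q assume "Q \<in> psi ` Om"
    then obtain C where C: "C \<in> T" "Q = psi (th C)" using Om_th by blast
    thus "Q \<in> green_quot T Tact e" using psi_eq quotientI by (simp add: green_quot_def)
  qed
  show "green_quot T Tact e \<subseteq> psi ` Om"
  proof
    fix Q assume "Q \<in> green_quot T Tact e"
    then obtain C where C: "C \<in> T" "Q = GT `` {C}" by (auto simp: green_quot_def elim: quotientE)
    hence "Q = psi (th C)" using psi_eq by simp
    moreover have "th C \<in> Om" using th_T C by blast
    ultimately show "Q \<in> psi ` Om" by blast
  qed
qed

lemma psi_eqv:
  assumes w: "w \<in> Om"
  shows "map_option psi (act w s) = gact T Tact e (psi w) s"
proof -
  obtain C where C: "C \<in> T" "th C = w" using Om_th w by blast
  have pw: "psi w = GT `` {C}" using psi_eq C by blast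
  have "C \<in> GT `` {C}" using eqvT C by (auto simp: equiv_def refl_on_def)
  hence "\<exists>x. x \<in> psi w" using pw by blast
  hence "(SOME x. x \<in> psi w) \<in> psi w" by (rule someI_ex)
  then obtain D where Dd: "D = (SOME x. x \<in> psi w)" and CD: "(C, D) \<in> GT" using pw by blast
  have DT: "D \<in> T" using CD by (auto simp: green_rel_def)
  have g: "gact T Tact e (psi w) s = map_option (gcl T Tact e) (Tact D s)"
    unfolding gact_def Let_def Dd by simp
  have thCD: "(w, th D) \<in> GO" using rel_iff C DT CD by simp
  show ?thesis
  proof (cases "act w s")
    case None
    hence "act (th D) s = None" using cong_None thCD by blast
    hence "Tact D s = None" using eqv[OF DT, of s] by simp
    thus ?thesis using g None by simp
  next
    case (Some a')
    obtain b' where b': "act (th D) s = Some b'" "(a', b') \<in> GO" using cong[OF thCD Some] by blast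
    obtain D1 where D1: "Tact D s = Some D1" "th D1 = b'" using eqv[OF DT, of s] b'(1)
      by (cases "Tact D s") auto
    have D1T: "D1 \<in> T" using Tact_T[OF DT D1(1)] .
    have a'O: "a' \<in> Om" using closed w Some by blast
    obtain C1 where C1: "C1 \<in> T" "th C1 = a'" using Om_th a'O by blast
    have "(C1, D1) \<in> GT" using rel_iff C1 D1T D1 b' by simp
    hence "GT `` {C1} = GT `` {D1}" using equiv_class_eq[OF eqvT] by blast
    hence "psi a' = gcl T Tact e D1" using psi_eq[OF C1(1)] C1(2) by (simp add: gcl_def)
    thus ?thesis using g Some D1 by simp
  qed
qed

lemma part2: "psi ` Om = green_quot T Tact e \<and> equivariant Om act (gact T Tact e) psi"
  using psi_img psi_eqv by (simp add: equivariant_def)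

lemma img3: "act_image (green_quot T Tact e) (gact T Tact e) e = psi ` X"
proof
  show "act_image (green_quot T Tact e) (gact T Tact e) e \<subseteq> psi ` X"
  proof
    fix y assume "y \<in> act_image (green_quot T Tact e) (gact T Tact e) e"
    then obtain Q where Q: "Q \<in> green_quot T Tact e" "gact T Tact e Q e = Some y"
      by (auto simp: act_image_def)
    then obtain w where w: "w \<in> Om" "Q = psi w" using psi_img by blast
    have "map_option psi (act w e) = Some y" using psi_eqv[OF w(1)] Q w by simp
    then obtain z where z: "act w e = Some z" "y = psi z" by auto
    have "z \<in> X" using w z by (auto simp: act_image_def)
    thus "y \<in> psi ` X" using z by blast
  qed
  show "psi ` X \<subseteq> act_image (green_quot T Tact e) (gact T Tact e) e"
  proof
    fix y assume "y \<in> psi ` X"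
    then obtain z where z: "z \<in> X" "y = psi z" by blast
    have zO: "z \<in> Om" and ze: "act z e = Some z" using X_fix z by auto
    have "psi z \<in> green_quot T Tact e" using psi_img zO by blast
    moreover have "gact T Tact e (psi z) e = Some (psi z)" using psi_eqv[OF zO, of e] ze by simp
    ultimately show "y \<in> act_image (green_quot T Tact e) (gact T Tact e) e"
      using z by (auto simp: act_image_def)
  qed
qed

lemma inj_psi: "inj_on psi X"
proof (rule inj_onI)
  fix z1 z2 assume z1: "z1 \<in> X" and z2: "z2 \<in> X" and eq: "psi z1 = psi z2"
  have z1O: "z1 \<in> Om" and z1e: "act z1 e = Some z1" using X_fix z1 by auto
  have z2O: "z2 \<in> Om" and z2e: "act z2 e = Some z2" using X_fix z2 by auto
  obtain C1 where C1: "C1 \<in> T" "th C1 = z1" using Om_th z1O by blast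
  obtain C2 where C2: "C2 \<in> T" "th C2 = z2" using Om_th z2O by blast
  have "GT `` {C1} = GT `` {C2}" using eq psi_eq C1 C2 by metis
  hence "(C1, C2) \<in> GT" using eq_equiv_class_iff[OF eqvT C1(1) C2(1)] by simp
  hence "(z1, z2) \<in> GO" using rel_iff C1 C2 by simp
  hence "Option.bind (act z1 e) (\<lambda>z. act z e) = Option.bind (act z2 e) (\<lambda>z. act z e)"
    by (auto simp: green_rel_def)
  thus "z1 = z2" using z1e z2e by simp
qed

lemma part3: "\<exists>\<phi>. bij_betw \<phi> (act_image (green_quot T Tact e) (gact T Tact e) e) X
              \<and> (\<forall>q\<in>act_image (green_quot T Tact e) (gact T Tact e) e. \<forall>g\<in>H.
                    map_option \<phi> (gact T Tact e q g) = act (\<phi> q) g)"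
proof (intro exI conjI)
  let ?phi = "inv_into X psi"
  show "bij_betw ?phi (act_image (green_quot T Tact e) (gact T Tact e) e) X"
    unfolding img3 by (rule bij_betw_inv_into[OF inj_on_imp_bij_betw[OF inj_psi]])
  show "\<forall>q\<in>act_image (green_quot T Tact e) (gact T Tact e) e. \<forall>g\<in>H.
          map_option ?phi (gact T Tact e q g) = act (?phi q) g"
  proof (intro ballI)
    fix q g assume q: "q \<in> act_image (green_quot T Tact e) (gact T Tact e) e" and g: "g \<in> H"
    then obtain z where z: "z \<in> X" "q = psi z" using img3 by blast
    have zO: "z \<in> Om" using X_fix z by blast
    have pz: "?phi q = z" using z inv_into_f_f[OF inj_psi] by simp
    have gq: "gact T Tact e q g = map_option psi (act z g)" using psi_eqv[OF zO] z by simp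
    show "map_option ?phi (gact T Tact e q g) = act (?phi q) g"
    proof (cases "act z g")
      case None thus ?thesis using gq pz by simp
    next
      case (Some z')
      have ge: "g*e = g" using g by (simp add: Hc)
      have "act z' e = act z (g*e)" using assoc2[OF zO Some] by simp
      hence "act z' e = Some z'" using ge Some by simp
      moreover have "z' \<in> Om" using closed zO Some by blast
      ultimately have "z' \<in> X" using X_I by blast
      hence "?phi (psi z') = z'" using inv_into_f_f[OF inj_psi] by simp
      thus ?thesis using gq pz Some by simp
    qed
  qed
qed

end

theorem proposition2p7:
  fixes J :: "'a::{finite, semigroup_mult} set"
    and e :: 'a
    and \<Omega> :: "'b set"
    and act :: "'b \<Rightarrow> 'a \<Rightarrow> 'b option"
  assumes "regular_Jclass J"
    and "e \<in> J" and "e * e = e"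
    and "partial_Sset \<Omega> act"
    and "semisimple \<Omega> act"
    and "\<forall>x\<in>\<Omega>. apex act (strong_orbit \<Omega> act x) J"
  defines "T \<equiv> tensor (act_image \<Omega> act e) act e"
    and "Tact \<equiv> tact (act_image \<Omega> act e) act e"
  shows "(\<exists>\<theta>. \<theta> ` T = \<Omega> \<and> equivariant T Tact act \<theta>
              \<and> inj_on \<theta> (act_image T Tact e))
       \<and> (\<exists>\<psi>. \<psi> ` \<Omega> = green_quot T Tact e \<and> equivariant \<Omega> act (gact T Tact e) \<psi>)
       \<and> (\<exists>\<phi>. bij_betw \<phi> (act_image (green_quot T Tact e) (gact T Tact e) e) (act_image \<Omega> act e)
              \<and> (\<forall>q\<in>act_image (green_quot T Tact e) (gact T Tact e) e. \<forall>g\<in>Hclass e.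
                    map_option \<phi> (gact T Tact e q g) = act (\<phi> q) g))"
proof -
  interpret P27 J e \<Omega> act
    using assms(1-6) by unfold_locales (auto simp: regular_Jclass_def)
  show ?thesis unfolding T_def Tact_def using part1 part2 part3 by blast
qed


end
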